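(* Let $n\ge1$. For a word $w$ over $\{a,b\}$ the following are equivalent: (1) $w\in L^{\epsilon}_{\vdash_{\{a^nb,\,a^n\}}}$; (2) $|w|_a\equiv 0 \pmod n$ and every prefix $p$ of $w$ satisfies $|p|_a\ge n|p|_b$; (3) $w\in L^{\epsilon}_{\{a^nb,\,a^n\}}$. In particular $L^{\epsilon}_{\vdash_{\{a^nb,a^n\}}}=L^{\epsilon}_{\{a^nb,a^n\}}$.
   Context: For words $u,v$, the shuffle $u \sqcup\!\sqcup v$ is the set of all words $u_1v_1\cdots u_kv_k$ with $k\ge 1$, $u=u_1\cdots u_k$, $v=v_1\cdots v_k$ (pieces possibly empty). For a finite set $I$ of words, $v \vdash_I w$ means $w \in v \sqcup\!\sqcup u$ for some $u\in I$; $\vdash_I^*$ is its reflexive-transitive closure and $L^{\epsilon}_{\vdash_I}=\{w : \epsilon \vdash_I^* w\}$. The relation $\Rightarrow_I$ is defined by $xy\Rightarrow_I xuy$ for all words $x,y$ and $u\in I$ (insertion of a word of $I$ as a factor), $\Rightarrow^*_I$ is its reflexive-transitive closure, and $L^{\epsilon}_{I}=\{w:\epsilon\Rightarrow_I^* w\}$. *)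

theory Defs
  imports Main "HOL-Library.Sublist"
begin

datatype ab = a | b

definition shuffle :: "'x list \<Rightarrow> 'x list \<Rightarrow> 'x list set" where
  "shuffle u v = {w. \<exists>us vs. length us = length vs \<and> length us \<ge> 1 \<and>
      concat us = u \<and> concat vs = v \<and>
      w = concat (map (\<lambda>(x, y). x @ y) (zip us vs))}"

definition shuf_step :: "'x list set \<Rightarrow> 'x list \<Rightarrow> 'x list \<Rightarrow> bool" where
  "shuf_step I v w \<longleftrightarrow> (\<exists>u\<in>I. w \<in> shuffle v u)"

definition shuf_lang :: "'x list set \<Rightarrow> 'x list set" where
  "shuf_lang I = {w. (shuf_step I)\<^sup>*\<^sup>* [] w}"

definition ins_step :: "'x list set \<Rightarrow> 'x list \<Rightarrow> 'x list \<Rightarrow> bool" where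
  "ins_step I v w \<longleftrightarrow> (\<exists>x y u. u \<in> I \<and> v = x @ y \<and> w = x @ u @ y)"

definition ins_lang :: "'x list set \<Rightarrow> 'x list set" where
  "ins_lang I = {w. (ins_step I)\<^sup>*\<^sup>* [] w}"

end

theory Submission
  imports Defs
begin

inductive il :: "'x list \<Rightarrow> 'x list \<Rightarrow> 'x list \<Rightarrow> bool" where
  il0: "il [] [] []"
| ilL: "il w v u \<Longrightarrow> il (x#w) (x#v) u"
| ilR: "il w v u \<Longrightarrow> il (x#w) v (x#u)"

lemma il_left: "il v v []"
  by (induction v) (auto intro: il.intros)

lemma il_right: "il u [] u"
  by (induction u) (auto intro: il.intros)

lemma il_append: "il w1 v1 u1 \<Longrightarrow> il w2 v2 u2 \<Longrightarrow> il (w1@w2) (v1@v2) (u1@u2)"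
  by (induction rule: il.induct) (auto intro: il.intros)

lemma il_xy: "il (x@y) x y"
  using il_append[OF il_left il_right] by simp

lemma il_concat: "length us = length vs \<Longrightarrow>
   il (concat (map (\<lambda>(x, y). x @ y) (zip us vs))) (concat us) (concat vs)"
proof (induction us vs rule: list_induct2)
  case Nil
  then show ?case by (simp add: il0)
next
  case (Cons x xs y ys)
  then show ?case using il_append[OF il_xy[of x y] Cons.IH] by simp
qed

lemma shuffle_il: "w \<in> shuffle v u \<Longrightarrow> il w v u"
  unfolding shuffle_def using il_concat by blast

lemma il_count: "il w v u \<Longrightarrow> count_list w x = count_list v x + count_list u x"
  by (induction rule: il.induct) auto

lemma il_prefix: "il w v u \<Longrightarrow> prefix p w \<Longrightarrow> \<exists>p1 p2. prefix p1 v \<and> prefix p2 u \<and> il p p1 p2"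
proof (induction arbitrary: p rule: il.induct)
  case il0
  then show ?case by (intro exI[of _ "[]"]) (auto intro: il.intros)
next
  case (ilL w v u x)
  show ?case
  proof (cases p)
    case Nil
    then show ?thesis by (intro exI[of _ "[]"]) (auto intro: il.intros)
  next
    case (Cons y p')
    then have "y = x" "prefix p' w" using ilL.prems by auto
    then obtain p1 p2 where "prefix p1 v" "prefix p2 u" "il p' p1 p2" using ilL.IH by blast
    then show ?thesis using Cons \<open>y = x\<close> by (intro exI[of _ "x#p1"] exI[of _ p2]) (auto intro: il.intros)
  qed
next
  case (ilR w v u x)
  show ?case
  proof (cases p)
    case Nil
    then show ?thesis by (intro exI[of _ "[]"]) (auto intro: il.intros)
  next
    case (Cons y p')
    then have "y = x" "prefix p' w" using ilR.prems by auto
    then obtain p1 p2 where "prefix p1 v" "prefix p2 u" "il p' p1 p2" using ilR.IH by blast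
    then show ?thesis using Cons \<open>y = x\<close> by (intro exI[of _ p1] exI[of _ "x#p2"]) (auto intro: il.intros)
  qed
qed

definition PP :: "nat \<Rightarrow> ab list \<Rightarrow> bool" where
  "PP n w \<longleftrightarrow> count_list w a mod n = 0 \<and>
            (\<forall>p. prefix p w \<longrightarrow> count_list p a \<ge> n * count_list p b)"

lemma count_rep[simp]: "count_list (replicate k x) y = (if x = y then k else 0)"
  by (induction k) auto

lemma pref_rep: "prefix p (replicate k x) \<Longrightarrow> p = replicate (length p) x"
proof -
  assume h: "prefix p (replicate k x)"
  have "set p \<subseteq> set (replicate k x)" using set_mono_prefix[OF h] .
  then have "\<forall>y\<in>set p. y = x" by auto
  then show ?thesis using replicate_length_same[of p x] by simp
qed

lemma I_pref:
  assumes "u \<in> {replicate n a @ [b], replicate n a}" "prefix p u"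
  shows "n * count_list p b \<le> count_list p a"
proof -
  have r: "n * count_list q b \<le> count_list q a" if "prefix q (replicate n a)" for q
  proof -
    have "count_list q b = 0" by (subst pref_rep[OF that]) simp
    then show ?thesis by simp
  qed
  show ?thesis
  proof (cases "u = replicate n a")
    case True then show ?thesis using r assms by simp
  next
    case False
    then have u: "u = replicate n a @ [b]" using assms by auto
    from assms(2)[unfolded u prefix_append] show ?thesis
    proof
      assume "prefix p (replicate n a)" then show ?thesis using r by blast
    next
      assume "\<exists>us. p = replicate n a @ us \<and> prefix us [b]"
      then obtain us where "p = replicate n a @ us" "prefix us [b]" by blast
      moreover have "us = [] \<or> us = [b]" using \<open>prefix us [b]\<close>
        by (cases us) auto
      ultimately show ?thesis by auto
    qed
  qed
qed

lemma step_PP: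
  assumes "n \<ge> 1" "PP n v" "shuf_step {replicate n a @ [b], replicate n a} v w"
  shows "PP n w"
proof -
  obtain u where u: "u \<in> {replicate n a @ [b], replicate n a}" "il w v u"
    using assms(3) shuffle_il unfolding shuf_step_def by blast
  have ca: "count_list u a = n" using u(1) by auto
  have "count_list w a mod n = 0"
    using il_count[OF u(2), of a] ca assms(2) unfolding PP_def by simp
  moreover have "n * count_list p b \<le> count_list p a" if pw: "prefix p w" for p
  proof -
    obtain p1 p2 where "prefix p1 v" "prefix p2 u" "il p p1 p2" using il_prefix[OF u(2) pw] by blast
    have c: "count_list p x = count_list p1 x + count_list p2 x" for x using \<open>il p p1 p2\<close> by (rule il_count)
    have "n * count_list p1 b \<le> count_list p1 a" using \<open>prefix p1 v\<close> assms(2) unfolding PP_def by blast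
    moreover have "n * count_list p2 b \<le> count_list p2 a" using I_pref[OF u(1) \<open>prefix p2 u\<close>] .
    ultimately show ?thesis using c[of a] c[of b] by (simp add: add_mult_distrib2)
  qed
  ultimately show ?thesis unfolding PP_def by auto
qed

lemma shuf_PP:
  assumes "n \<ge> 1" "w \<in> shuf_lang {replicate n a @ [b], replicate n a}"
  shows "PP n w"
proof -
  have "(shuf_step {replicate n a @ [b], replicate n a})\<^sup>*\<^sup>* [] w" using assms(2) by (simp add: shuf_lang_def)
  then show ?thesis
  proof (induction rule: rtranclp_induct)
    case base
    then show ?case by (simp add: PP_def)
  next
    case (step y z)
    then show ?case using step_PP assms(1) by blast
  qed
qed

lemma ins_mem: "x @ u @ y \<in> shuffle (x @ y) u"
  unfolding shuffle_def
  by (rule CollectI, rule exI[of _ "[x,y]"], rule exI[of _ "[u,[]]"]) simp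

lemma ins_shuf: "ins_step I v w \<Longrightarrow> shuf_step I v w"
  unfolding ins_step_def shuf_step_def using ins_mem by blast

lemma ins_sub_shuf: "w \<in> ins_lang I \<Longrightarrow> w \<in> shuf_lang I"
  unfolding ins_lang_def shuf_lang_def
  using mono_rtranclp[of "ins_step I" "shuf_step I"] ins_shuf by blast

lemma ins_lang_step: "v \<in> ins_lang I \<Longrightarrow> ins_step I v w \<Longrightarrow> w \<in> ins_lang I"
  unfolding ins_lang_def by (auto intro: rtranclp.rtrancl_into_rtrancl)

lemma all_a: "b \<notin> set w \<Longrightarrow> w = replicate (length w) a"
proof -
  assume "b \<notin> set w"
  then have "\<forall>y\<in>set w. y = a" by (metis ab.exhaust)
  then show ?thesis using replicate_length_same[of w a] by simp
qed

lemma PP_ins: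
  assumes "n \<ge> 1" "PP n w"
  shows "w \<in> ins_lang {replicate n a @ [b], replicate n a}"
  using assms(2)
proof (induction "length w" arbitrary: w rule: less_induct)
  case less
  define J where "J = {replicate n a @ [b], replicate n a}"
  show ?case
  proof (cases "w = []")
    case True
    then show ?thesis by (simp add: ins_lang_def)
  next
    case False
    show ?thesis
    proof (cases "b \<in> set w")
      case nb: False
      define m where "m = length w"
      have w: "w = replicate m a" using all_a[OF nb] m_def by simp
      have "m > 0" using False m_def by simp
      have "m mod n = 0" using less.prems w unfolding PP_def by simp
      then have "m \<ge> n" using \<open>m > 0\<close> by (metis mod_less not_le neq0_conv)
      define v where "v = replicate (m - n) a"
      have "(m - n) mod n = 0" using \<open>m mod n = 0\<close> \<open>m \<ge> n\<close> by (simp add: le_mod_geq)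
      moreover have "n * count_list p b \<le> count_list p a" if "prefix p v" for p
      proof -
        have "count_list p b = 0" unfolding v_def by (subst pref_rep[OF that[unfolded v_def]]) simp
        then show ?thesis by simp
      qed
      ultimately have "PP n v" unfolding PP_def v_def by simp
      moreover have "length v < length w" using \<open>m > 0\<close> assms(1) v_def w by simp
      ultimately have "v \<in> ins_lang J" using less.hyps J_def by blast
      moreover have "ins_step J v w"
        unfolding ins_step_def J_def
        by (rule exI[of _ v], rule exI[of _ "[]"], rule exI[of _ "replicate n a"])
           (simp add: w v_def replicate_add[symmetric] \<open>m \<ge> n\<close>)
      ultimately show ?thesis using ins_lang_step J_def by blast
    next
      case True
      obtain xs ys where w: "w = xs @ b # ys" and nbx: "b \<notin> set xs"
        using split_list_first[OF True] by blast
      define k where "k = length xs"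
      have xs: "xs = replicate k a" using all_a[OF nbx] k_def by simp
      have "prefix (xs @ [b]) w" using w by simp
      then have "n * 1 \<le> k" using less.prems xs unfolding PP_def by fastforce
      define v where "v = replicate (k - n) a @ ys"
      have wv: "w = replicate (k - n) a @ (replicate n a @ [b]) @ ys"
        using w xs \<open>n * 1 \<le> k\<close> by (simp add: replicate_add[symmetric])
      have cw: "count_list w a = k + count_list ys a" using w xs by simp
      have "count_list v a mod n = 0"
        using less.prems cw \<open>n * 1 \<le> k\<close> unfolding PP_def v_def
        by (simp add: le_mod_geq)
      moreover have "n * count_list p b \<le> count_list p a" if pv: "prefix p v" for p
      proof -
        from pv[unfolded v_def prefix_append] show ?thesis
        proof
          assume h: "prefix p (replicate (k - n) a)"
          have "count_list p b = 0" by (subst pref_rep[OF h]) simp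
          then show ?thesis by simp
        next
          assume "\<exists>us. p = replicate (k - n) a @ us \<and> prefix us ys"
          then obtain q where q: "p = replicate (k - n) a @ q" "prefix q ys" by blast
          have "prefix (xs @ b # q) w" using w q(2) by simp
          then have "n * count_list (xs @ b # q) b \<le> count_list (xs @ b # q) a"
            using less.prems unfolding PP_def by blast
          then have "n * (1 + count_list q b) \<le> k + count_list q a" using xs by simp
          then show ?thesis using q(1) \<open>n * 1 \<le> k\<close> by (simp add: algebra_simps)
        qed
      qed
      ultimately have "PP n v" unfolding PP_def by simp
      moreover have "length v < length w" using wv v_def by simp
      ultimately have "v \<in> ins_lang J" using less.hyps J_def by blast
      moreover have "ins_step J v w"
        unfolding ins_step_def J_def
        by (rule exI[of _ "replicate (k - n) a"], rule exI[of _ ys], rule exI[of _ "replicate n a @ [b]"])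
           (simp add: wv v_def)
      ultimately show ?thesis using ins_lang_step J_def by blast
    qed
  qed
qed

theorem lemma13:
  fixes n :: nat and w :: "ab list"
  assumes "n \<ge> 1"
  defines "I \<equiv> {replicate n a @ [b], replicate n a}"
  shows "(w \<in> shuf_lang I \<longleftrightarrow>
           (count_list w a mod n = 0 \<and>
            (\<forall>p. prefix p w \<longrightarrow> count_list p a \<ge> n * count_list p b)))
       \<and> (w \<in> shuf_lang I \<longleftrightarrow> w \<in> ins_lang I)
       \<and> shuf_lang I = ins_lang I"
proof -
  have eq: "x \<in> shuf_lang I \<longleftrightarrow> PP n x" for x
    using shuf_PP[OF assms(1)] PP_ins[OF assms(1)] ins_sub_shuf unfolding I_def by blast
  have eq2: "x \<in> shuf_lang I \<longleftrightarrow> x \<in> ins_lang I" for x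
    using shuf_PP[OF assms(1)] PP_ins[OF assms(1)] ins_sub_shuf unfolding I_def by blast
  show ?thesis using eq[of w] eq2 unfolding PP_def by blast
qed

end
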